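(* Let $V=\mathbb R^{p,q}$, $W$ a $C\ell^0(V)$-module, $\Pi:\wedge^2W\to V$ an $\mathfrak o(V)$-equivariant linear map, $p=p'+p''$ with $p'\equiv3\pmod4$, and $b=b(\Pi)$. Then the kernels of the linear maps $W\to W^*\otimes V$, $s\mapsto\Pi(s\wedge\cdot)$, and $W\to W^*$, $s\mapsto b(s,\cdot)$, coincide. In particular $\Pi$ is nondegenerate if and only if $b$ is nondegenerate.
   Context: Let $V=\mathbb{R}^{p,q}$ be $\mathbb R^{p+q}$ with the scalar product $\langle x,y\rangle=\sum_{i=1}^{p}x^iy^i-\sum_{j=p+1}^{p+q}x^jy^j$ and its standard orthonormal basis. The Clifford algebra $C\ell(V)$ is generated by $V$ subject to $xy+yx=-2\langle x,y\rangle 1$, with even part $C\ell^0(V)$. Identify $\mathfrak{o}(V)=\wedge^2V$ via $(x\wedge y)(z)=\langle y,z\rangle x-\langle x,z\rangle y$; the map $x\wedge y\mapsto-\frac14(xy-yx)$ is a Lie algebra isomorphism of $\mathfrak o(V)$ onto $\mathfrak{spin}(V)\subset C\ell^0(V)$, and via it $\mathfrak o(V)$ acts on any $C\ell^0(V)$-module $W$. $\Pi$ is called nondegenerate if $s\mapsto\Pi(s\wedge\cdot)$ is injective. Fix $p=p'+p''$ with $p'\equiv 3\pmod 4$; $e_1,\dots,e_{p'}$ are the first $p'$ standard basis vectors, spanning $E$, and $b(s,t)=\langle e_1,\Pi(e_2\cdots e_{p'}s\wedge t)\rangle$ for $s,t\in W$ (Clifford product acting on $W$). *)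

theory Defs
  imports Complex_Main
begin

text \<open>Concrete model of the Clifford algebra Cl(R^{p,q}), n = p+q, with
  standard orthonormal basis e_0,...,e_{n-1} (0-indexed; e_k has
  <e_k,e_k> = 1 for k < p and -1 for k >= p).  An element is a function
  from finite subsets A of {0..<n} (blades e_A = e_{a1}...e_{ak}, a1<...<ak)
  to real coefficients.  Relation: x y + y x = -2 <x,y> 1, hence
  e_k e_k = -<e_k,e_k>.\<close>

definition eta :: "nat \<Rightarrow> nat \<Rightarrow> real" where
  "eta p k = (if k < p then 1 else -1)"

definition blade_sign :: "nat \<Rightarrow> nat set \<Rightarrow> nat set \<Rightarrow> real" where
  "blade_sign p A B =
     (-1) ^ card {(a, b). a \<in> A \<and> b \<in> B \<and> b < a} * (\<Prod>k\<in>A \<inter> B. - eta p k)"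

definition cl_mult :: "nat \<Rightarrow> nat \<Rightarrow> (nat set \<Rightarrow> real) \<Rightarrow> (nat set \<Rightarrow> real) \<Rightarrow> (nat set \<Rightarrow> real)" where
  "cl_mult n p x y = (\<lambda>C. \<Sum>A\<in>Pow {0..<n}. \<Sum>B\<in>Pow {0..<n}.
       if (A - B) \<union> (B - A) = C then blade_sign p A B * x A * y B else 0)"

definition cl_one :: "nat set \<Rightarrow> real" where
  "cl_one = (\<lambda>A. if A = {} then 1 else 0)"

definition cl_e :: "nat \<Rightarrow> nat set \<Rightarrow> real" where
  "cl_e i = (\<lambda>A. if A = {i} then 1 else 0)"

definition cl_elem :: "nat \<Rightarrow> (nat set \<Rightarrow> real) \<Rightarrow> bool" where
  "cl_elem n x \<longleftrightarrow> (\<forall>A. x A \<noteq> 0 \<longrightarrow> A \<subseteq> {0..<n})"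

definition cl_even :: "nat \<Rightarrow> (nat set \<Rightarrow> real) \<Rightarrow> bool" where
  "cl_even n x \<longleftrightarrow> (\<forall>A. x A \<noteq> 0 \<longrightarrow> A \<subseteq> {0..<n} \<and> even (card A))"

definition cl_prod :: "nat \<Rightarrow> nat \<Rightarrow> (nat set \<Rightarrow> real) list \<Rightarrow> (nat set \<Rightarrow> real)" where
  "cl_prod n p xs = foldr (cl_mult n p) xs cl_one"

text \<open>the spin image of e_i \<and> e_j: -1/4 (e_i e_j - e_j e_i)\<close>
definition cl_spin :: "nat \<Rightarrow> nat \<Rightarrow> nat \<Rightarrow> nat \<Rightarrow> nat set \<Rightarrow> real" where
  "cl_spin n p i j = (\<lambda>A. - (1/4) * (cl_mult n p (cl_e i) (cl_e j) A - cl_mult n p (cl_e j) (cl_e i) A))"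

text \<open>action of e_i \<and> e_j \<in> o(V) on V (vectors as nat => real, components < n):
  (x \<and> y)(z) = <y,z> x - <x,z> y\<close>
definition wedge_act :: "nat \<Rightarrow> nat \<Rightarrow> nat \<Rightarrow> (nat \<Rightarrow> real) \<Rightarrow> (nat \<Rightarrow> real)" where
  "wedge_act p i j z = (\<lambda>k. (if k = i then eta p j * z j else 0) - (if k = j then eta p i * z i else 0))"

definition cl0_module :: "nat \<Rightarrow> nat \<Rightarrow> ((nat set \<Rightarrow> real) \<Rightarrow> 'w::real_vector \<Rightarrow> 'w) \<Rightarrow> bool" where
  "cl0_module n p \<rho> \<longleftrightarrow>
     (\<forall>x. cl_even n x \<longrightarrow> linear (\<rho> x)) \<and>
     (\<forall>x y a. cl_even n x \<longrightarrow> cl_even n y \<longrightarrow>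
         (\<forall>w. \<rho> (\<lambda>A. a * x A + y A) w = a *\<^sub>R \<rho> x w + \<rho> y w)) \<and>
     (\<forall>w. \<rho> cl_one w = w) \<and>
     (\<forall>x y. cl_even n x \<longrightarrow> cl_even n y \<longrightarrow> (\<forall>w. \<rho> (cl_mult n p x y) w = \<rho> x (\<rho> y w)))"

text \<open>Pi : \<and>^2 W \<rightarrow> V given as an antisymmetric bilinear map W \<times> W \<rightarrow> V,
  V-vectors as coordinate functions nat => real vanishing from index n on\<close>
definition wedge2_map :: "nat \<Rightarrow> ('w::real_vector \<Rightarrow> 'w \<Rightarrow> nat \<Rightarrow> real) \<Rightarrow> bool" where
  "wedge2_map n \<Pi> \<longleftrightarrow>
     (\<forall>s i. linear (\<lambda>t. \<Pi> s t i)) \<and> (\<forall>t i. linear (\<lambda>s. \<Pi> s t i)) \<and>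
     (\<forall>s t. \<Pi> s t = (\<lambda>i. - \<Pi> t s i)) \<and> (\<forall>s t i. n \<le> i \<longrightarrow> \<Pi> s t i = 0)"

text \<open>o(V)-equivariance, checked on the basis e_i \<and> e_j of o(V) = \<and>^2 V
  (equivalent to equivariance for all of o(V) by linearity)\<close>
definition equivariant :: "nat \<Rightarrow> nat \<Rightarrow> ((nat set \<Rightarrow> real) \<Rightarrow> 'w::real_vector \<Rightarrow> 'w)
     \<Rightarrow> ('w \<Rightarrow> 'w \<Rightarrow> nat \<Rightarrow> real) \<Rightarrow> bool" where
  "equivariant n p \<rho> \<Pi> \<longleftrightarrow>
     (\<forall>i j s t. i < n \<longrightarrow> j < n \<longrightarrow>
        (\<lambda>k. \<Pi> (\<rho> (cl_spin n p i j) s) t k + \<Pi> s (\<rho> (cl_spin n p i j) t) k)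
        = wedge_act p i j (\<Pi> s t))"

text \<open>b(s,t) = <e_1, Pi(e_2 ... e_{p'} s \<and> t)>; 0-indexed: e_0 and e_1...e_{p'-1}.
  <e_0, v> = v 0 since e_0 is spacelike (p \<ge> p' \<ge> 3).\<close>
definition bform :: "nat \<Rightarrow> nat \<Rightarrow> nat \<Rightarrow> ((nat set \<Rightarrow> real) \<Rightarrow> 'w \<Rightarrow> 'w)
     \<Rightarrow> ('w \<Rightarrow> 'w \<Rightarrow> nat \<Rightarrow> real) \<Rightarrow> 'w \<Rightarrow> 'w \<Rightarrow> real" where
  "bform n p p' \<rho> \<Pi> s t = eta p 0 * \<Pi> (\<rho> (cl_prod n p (map cl_e [1..<p'])) s) t 0"

end

theory Submission
  imports Defs
begin

lemma mult_blade:
  assumes "D \<subseteq> {0..<n}"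
  shows "cl_mult n p (\<lambda>A. if A = D then c else 0) y C =
    (if C \<subseteq> {0..<n} then c * blade_sign p D ((C - D) \<union> (D - C)) * y ((C - D) \<union> (D - C)) else 0)"
proof -
  have "cl_mult n p (\<lambda>A. if A = D then c else 0) y C =
     (\<Sum>A\<in>Pow {0..<n}. if A = D then (\<Sum>B\<in>Pow {0..<n}. if (D - B) \<union> (B - D) = C then blade_sign p D B * c * y B else 0) else 0)"
    unfolding cl_mult_def by (rule sum.cong) (simp_all add: if_distrib[of "\<lambda>x. _ * x * _"] cong: if_cong)
  also have "\<dots> = (\<Sum>B\<in>Pow {0..<n}. if (D - B) \<union> (B - D) = C then blade_sign p D B * c * y B else 0)"
    using assms by (simp add: sum.delta)
  also have "\<dots> = (\<Sum>B\<in>Pow {0..<n}. if B = (C - D) \<union> (D - C) then blade_sign p D B * c * y B else 0)"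
    by (rule sum.cong) (auto intro!: if_cong)
  also have "\<dots> = (if C \<subseteq> {0..<n} then c * blade_sign p D ((C - D) \<union> (D - C)) * y ((C - D) \<union> (D - C)) else 0)"
  proof -
    have "((C - D) \<union> (D - C) \<in> Pow {0..<n}) = (C \<subseteq> {0..<n})" using assms by blast
    then show ?thesis by (subst sum.delta[OF finite_Pow_iff[THEN iffD2]]) (auto simp: ac_simps)
  qed
  finally show ?thesis .
qed

lemma sgn1: "blade_sign p {a} B = (-1) ^ card {y\<in>B. y < a} * (if a \<in> B then - eta p a else 1)"
proof -
  have "{(x, y). x \<in> {a} \<and> y \<in> B \<and> y < x} = Pair a ` {y\<in>B. y < a}" by auto
  then have "card {(x, y). x \<in> {a} \<and> y \<in> B \<and> y < x} = card {y\<in>B. y < a}"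
    by (simp add: card_image inj_on_def)
  moreover have "{a} \<inter> B = (if a \<in> B then {a} else {})" by auto
  ultimately show ?thesis unfolding blade_sign_def by simp
qed

lemma sgn2:
  assumes "a \<noteq> b"
  shows "blade_sign p {a, b} B = (-1) ^ (card {y\<in>B. y < a} + card {y\<in>B. y < b})
     * (if a \<in> B then - eta p a else 1) * (if b \<in> B then - eta p b else 1)"
proof -
  have fa: "finite {y\<in>B. y < a}" "finite {y\<in>B. y < b}" by auto
  have "{(x, y). x \<in> {a, b} \<and> y \<in> B \<and> y < x} = Pair a ` {y\<in>B. y < a} \<union> Pair b ` {y\<in>B. y < b}" by auto
  moreover have "Pair a ` {y\<in>B. y < a} \<inter> Pair b ` {y\<in>B. y < b} = {}" using assms by auto
  ultimately have "card {(x, y). x \<in> {a, b} \<and> y \<in> B \<and> y < x} = card {y\<in>B. y < a} + card {y\<in>B. y < b}"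
    using fa by (simp add: card_Un_disjoint card_image inj_on_def)
  moreover have "(\<Prod>k\<in>{a, b} \<inter> B. - eta p k) = (if a \<in> B then - eta p a else 1) * (if b \<in> B then - eta p b else 1)"
    using assms by (cases "a \<in> B"; cases "b \<in> B") (auto simp: Int_insert_left)
  ultimately show ?thesis unfolding blade_sign_def by simp
qed

lemma finlt: "finite {y\<in>X. y < (a::nat)}"
  by (rule finite_subset[of _ "{..<a}"]) auto

lemma cid: "x \<notin> {y\<in>X. y < (a::nat)} \<Longrightarrow> card (insert x {y\<in>X. y < a}) = Suc (card {y\<in>X. y < a})"
  by (rule card_insert_disjoint[OF finlt])

lemma par:
  fixes a b :: nat
  shows "(-1::real) ^ card {y\<in>(B - {b}) \<union> ({b} - B). y < a} = (-1) ^ card {y\<in>B. y < a} * (if b < a then -1 else 1)"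
proof (cases "b < a")
  case True
  show ?thesis
  proof (cases "b \<in> B")
    case True
    have e: "{y\<in>B. y < a} = insert b {y\<in>(B - {b}) \<union> ({b} - B). y < a}" using True \<open>b < a\<close> by auto
    have "b \<notin> {y\<in>(B - {b}) \<union> ({b} - B). y < a}" using True by auto
    then have "card {y\<in>B. y < a} = Suc (card {y\<in>(B - {b}) \<union> ({b} - B). y < a})"
      unfolding e by (rule cid)
    then show ?thesis using \<open>b < a\<close> by simp
  next
    case False
    have e: "{y\<in>(B - {b}) \<union> ({b} - B). y < a} = insert b {y\<in>B. y < a}" using False \<open>b < a\<close> by auto
    have "card {y\<in>(B - {b}) \<union> ({b} - B). y < a} = Suc (card {y\<in>B. y < a})"
      unfolding e by (rule cid) (use False in auto)
    then show ?thesis using \<open>b < a\<close> by simp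
  qed
next
  case False
  then have "{y\<in>(B - {b}) \<union> ({b} - B). y < a} = {y\<in>B. y < a}" by auto
  then show ?thesis using False by simp
qed

lemma ee:
  assumes "a < n" "b < n" "a \<noteq> b"
  shows "cl_mult n p (cl_e a) (cl_e b) = (\<lambda>C. if C = {a, b} then (if b < a then -1 else 1) else 0)"
proof
  fix C
  have "cl_mult n p (cl_e a) (cl_e b) C = (if C \<subseteq> {0..<n} then 1 * blade_sign p {a} ((C - {a}) \<union> ({a} - C)) * cl_e b ((C - {a}) \<union> ({a} - C)) else 0)"
    unfolding cl_e_def[of a] using assms by (subst mult_blade) auto
  also have "\<dots> = (if C = {a, b} then (if b < a then -1 else 1) else 0)"
  proof (cases "C = {a, b}")
    case True
    then have "(C - {a}) \<union> ({a} - C) = {b}" using assms by auto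
    moreover have "{y\<in>{b}. y < a} = (if b < a then {b} else {})" by auto
    ultimately show ?thesis using True assms by (simp add: cl_e_def sgn1)
  next
    case False
    then have "(C - {a}) \<union> ({a} - C) \<noteq> {b}" using assms by auto
    then show ?thesis using False by (simp add: cl_e_def)
  qed
  finally show "cl_mult n p (cl_e a) (cl_e b) C = (if C = {a, b} then (if b < a then -1 else 1) else 0)" .
qed

lemma mult_e:
  assumes "a < n"
  shows "cl_mult n p (cl_e a) y C = (if C \<subseteq> {0..<n} then blade_sign p {a} ((C - {a}) \<union> ({a} - C)) * y ((C - {a}) \<union> ({a} - C)) else 0)"
  unfolding cl_e_def using assms by (subst mult_blade) auto

lemma assoc_ee:
  assumes "a < n" "b < n" "a \<noteq> b"
  shows "cl_mult n p (cl_mult n p (cl_e a) (cl_e b)) y = cl_mult n p (cl_e a) (cl_mult n p (cl_e b) y)"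
proof
  fix C
  let ?B = "(C - {a, b}) \<union> ({a, b} - C)"
  let ?Ca = "(C - {a}) \<union> ({a} - C)"
  have "cl_mult n p (cl_mult n p (cl_e a) (cl_e b)) y C =
     (if C \<subseteq> {0..<n} then (if b < a then -1 else 1) * blade_sign p {a, b} ?B * y ?B else 0)"
    using assms by (simp add: ee mult_blade)
  moreover have "cl_mult n p (cl_e a) (cl_mult n p (cl_e b) y) C =
     (if C \<subseteq> {0..<n} then blade_sign p {a} ?Ca * blade_sign p {b} ((?Ca - {b}) \<union> ({b} - ?Ca)) * y ((?Ca - {b}) \<union> ({b} - ?Ca)) else 0)"
  proof -
    have "C \<subseteq> {0..<n} \<Longrightarrow> ?Ca \<subseteq> {0..<n}" using assms by auto
    then show ?thesis using assms by (simp add: mult_e)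
  qed
  moreover have e1: "(?Ca - {b}) \<union> ({b} - ?Ca) = ?B" using assms by auto
  moreover have e2: "?Ca = (?B - {b}) \<union> ({b} - ?B)" using assms by auto
  moreover have "(if b < a then -1 else 1) * blade_sign p {a, b} ?B = blade_sign p {a} ?Ca * blade_sign p {b} ?B"
  proof -
    define B where "B = ?B"
    have am: "a \<in> (B - {b}) \<union> ({b} - B) \<longleftrightarrow> a \<in> B" using assms by auto
    have "blade_sign p {a} ((B - {b}) \<union> ({b} - B)) = (-1) ^ card {y\<in>B. y < a} * (if b < a then -1 else 1) * (if a \<in> B then - eta p a else 1)"
      unfolding sgn1 par am ..
    moreover have "blade_sign p {b} B = (-1) ^ card {y\<in>B. y < b} * (if b \<in> B then - eta p b else 1)"
      by (rule sgn1)
    moreover have "blade_sign p {a, b} B = (-1) ^ card {y\<in>B. y < a} * (-1) ^ card {y\<in>B. y < b}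
     * (if a \<in> B then - eta p a else 1) * (if b \<in> B then - eta p b else 1)"
      by (subst sgn2[OF assms(3)]) (simp add: power_add)
    ultimately have "(if b < a then -1 else 1) * blade_sign p {a, b} B = blade_sign p {a} ((B - {b}) \<union> ({b} - B)) * blade_sign p {b} B"
      by (simp only:) (simp add: ac_simps)
    then show ?thesis unfolding B_def e2[symmetric] .
  qed
  ultimately show "cl_mult n p (cl_mult n p (cl_e a) (cl_e b)) y C = cl_mult n p (cl_e a) (cl_mult n p (cl_e b) y) C"
    by simp
qed

lemma lin_scale: "linear f \<Longrightarrow> f (c *\<^sub>R x) = c *\<^sub>R f x"
  by (rule linear_scale)

lemma ee_sq:
  assumes "a < n" "b < n" "a \<noteq> b"
  shows "cl_mult n p (cl_mult n p (cl_e a) (cl_e b)) (cl_mult n p (cl_e a) (cl_e b)) = (\<lambda>C. (- eta p a * eta p b) * cl_one C)"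
proof
  fix C
  define s :: real where "s = (if b < a then -1 else 1)"
  have E: "cl_mult n p (cl_e a) (cl_e b) = (\<lambda>A. if A = {a, b} then s else 0)"
    unfolding s_def using assms by (rule ee)
  have ss: "s * s = 1" unfolding s_def by simp
  show "cl_mult n p (cl_mult n p (cl_e a) (cl_e b)) (cl_mult n p (cl_e a) (cl_e b)) C = (- eta p a * eta p b) * cl_one C"
  proof (cases "C = {}")
    case True
    have "{y \<in> {a, b}. y < a} = (if b < a then {b} else {})" "{y \<in> {a, b}. y < b} = (if a < b then {a} else {})"
      using assms by auto
    then have "blade_sign p {a, b} {a, b} = - (eta p a * eta p b)"
      using assms by (subst sgn2) auto
    then show ?thesis unfolding E using True assms
      by (subst mult_blade) (auto simp: cl_one_def ss algebra_simps)
  next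
    case False
    then have "(C - {a, b}) \<union> ({a, b} - C) \<noteq> {a, b}" by auto
    then show ?thesis unfolding E using False assms
      by (subst mult_blade) (auto simp: cl_one_def)
  qed
qed

lemma spin_ee:
  assumes "a < n" "b < n" "a \<noteq> b"
  shows "cl_spin n p a b = (\<lambda>C. (- 1/2) * cl_mult n p (cl_e a) (cl_e b) C)"
  unfolding cl_spin_def using assms by (auto simp: ee insert_commute)

lemma ee_even:
  assumes "a < n" "b < n" "a \<noteq> b"
  shows "cl_even n (cl_mult n p (cl_e a) (cl_e b))"
  unfolding cl_even_def using assms by (simp add: ee)

lemma prod_supp:
  "(\<forall>x\<in>set xs. x < n) \<Longrightarrow> cl_prod n p (map cl_e xs) A \<noteq> 0 \<Longrightarrow> A \<subseteq> {0..<n} \<and> even (card A + length xs)"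
proof (induction xs arbitrary: A)
  case Nil
  then show ?case by (simp add: cl_prod_def cl_one_def split: if_splits)
next
  case (Cons x xs)
  have eq: "cl_prod n p (map cl_e (x # xs)) = cl_mult n p (cl_e x) (cl_prod n p (map cl_e xs))"
    by (simp add: cl_prod_def)
  have A: "A \<subseteq> {0..<n}" and nz: "cl_prod n p (map cl_e xs) ((A - {x}) \<union> ({x} - A)) \<noteq> 0"
    using Cons.prems unfolding eq by (auto simp: mult_e split: if_splits)
  from Cons.IH[OF _ nz] Cons.prems have ev: "even (card ((A - {x}) \<union> ({x} - A)) + length xs)" by auto
  have fA: "finite A" using A finite_subset by blast
  show ?case
  proof (cases "x \<in> A")
    case True
    then have "(A - {x}) \<union> ({x} - A) = A - {x}" by auto
    moreover have "card A = Suc (card (A - {x}))" using True fA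
      by (metis card_Suc_Diff1)
    ultimately show ?thesis using ev A by auto
  next
    case False
    then have "(A - {x}) \<union> ({x} - A) = insert x A" by auto
    moreover have "card (insert x A) = Suc (card A)" using False fA by simp
    ultimately show ?thesis using ev A by auto
  qed
qed

lemma prod_even:
  "(\<forall>x\<in>set xs. x < n) \<Longrightarrow> even (length xs) \<Longrightarrow> cl_even n (cl_prod n p (map cl_e xs))"
  unfolding cl_even_def using prod_supp by fastforce

theorem mainTheorem2:
  fixes p q p' :: nat
    and \<rho> :: "(nat set \<Rightarrow> real) \<Rightarrow> 'w::real_vector \<Rightarrow> 'w"
    and \<Pi> :: "'w \<Rightarrow> 'w \<Rightarrow> nat \<Rightarrow> real"
  assumes "cl0_module (p + q) p \<rho>"
    and "wedge2_map (p + q) \<Pi>"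
    and "equivariant (p + q) p \<rho> \<Pi>"
    and "p' \<le> p" and "p' mod 4 = 3"
  shows "{s. \<forall>t. \<Pi> s t = (\<lambda>i. 0)} = {s. \<forall>t. bform (p + q) p p' \<rho> \<Pi> s t = 0}
     \<and> ((\<forall>s. (\<forall>t. \<Pi> s t = (\<lambda>i. 0)) \<longrightarrow> s = 0) \<longleftrightarrow>
        (\<forall>s. (\<forall>t. bform (p + q) p p' \<rho> \<Pi> s t = 0) \<longrightarrow> s = 0))"
proof -
  define n where "n = p + q"
  have lin: "\<And>x. cl_even n x \<Longrightarrow> linear (\<rho> x)"
    and comb: "\<And>x y a w. cl_even n x \<Longrightarrow> cl_even n y \<Longrightarrow> \<rho> (\<lambda>A. a * x A + y A) w = a *\<^sub>R \<rho> x w + \<rho> y w"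
    and one: "\<And>w. \<rho> cl_one w = w"
    and mult: "\<And>x y w. cl_even n x \<Longrightarrow> cl_even n y \<Longrightarrow> \<rho> (cl_mult n p x y) w = \<rho> x (\<rho> y w)"
    using assms(1) unfolding cl0_module_def n_def by blast+
  have linT: "\<And>s i. linear (\<lambda>t. \<Pi> s t i)" and linS: "\<And>t i. linear (\<lambda>s. \<Pi> s t i)"
    and van: "\<And>s t i. n \<le> i \<Longrightarrow> \<Pi> s t i = 0"
    using assms(2) unfolding wedge2_map_def n_def by blast+
  have eqv: "\<And>i j s t k. i < n \<Longrightarrow> j < n \<Longrightarrow>
        \<Pi> (\<rho> (cl_spin n p i j) s) t k + \<Pi> s (\<rho> (cl_spin n p i j) t) k = wedge_act p i j (\<Pi> s t) k"
    using assms(3) unfolding equivariant_def n_def by metis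
  have Ss: "\<And>c s t i. \<Pi> (c *\<^sub>R s) t i = c * \<Pi> s t i"
    using lin_scale[OF linS] by simp
  have St: "\<And>c s t i. \<Pi> s (c *\<^sub>R t) i = c * \<Pi> s t i"
    using lin_scale[OF linT] by simp
  have ev0: "cl_even n (\<lambda>_. 0)" unfolding cl_even_def by simp
  have rho0: "\<rho> (\<lambda>_. 0) w = 0" for w
    using comb[OF ev0 ev0, of 1 w] by simp
  have scale: "\<rho> (\<lambda>A. c * x A) w = c *\<^sub>R \<rho> x w" if "cl_even n x" for c x w
    using comb[OF that ev0, of c w] rho0 by simp
  have p0: "0 < p" using assms(4,5) by presburger
  have eta0: "eta p 0 = 1" using p0 by (simp add: eta_def)
  have etanz: "eta p j \<noteq> 0" for j by (simp add: eta_def)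
  define E where "E a b = cl_mult n p (cl_e a) (cl_e b)" for a b
  define K where "K = {s. \<forall>t. \<Pi> s t = (\<lambda>i. 0)}"
  have Eev: "cl_even n (E a b)" if "a < n" "b < n" "a \<noteq> b" for a b
    unfolding E_def using that by (rule ee_even)
  have Esq: "\<rho> (E a b) (\<rho> (E a b) w) = (- eta p a * eta p b) *\<^sub>R w" if "a < n" "b < n" "a \<noteq> b" for a b w
  proof -
    have "\<rho> (E a b) (\<rho> (E a b) w) = \<rho> (cl_mult n p (E a b) (E a b)) w"
      using mult[OF Eev[OF that] Eev[OF that]] by simp
    also have "\<dots> = \<rho> (\<lambda>C. (- eta p a * eta p b) * cl_one C) w"
      unfolding E_def using that by (simp add: ee_sq)
    also have "\<dots> = (- eta p a * eta p b) *\<^sub>R w"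
    proof -
      have "cl_even n cl_one" by (simp add: cl_even_def cl_one_def)
      from scale[OF this, of "- eta p a * eta p b" w] show ?thesis by (simp only: one)
    qed
    finally show ?thesis .
  qed
  have eqE: "\<Pi> (\<rho> (E a b) s) t k + \<Pi> s (\<rho> (E a b) t) k = -2 * wedge_act p a b (\<Pi> s t) k"
    if "a < n" "b < n" "a \<noteq> b" for a b s t k
  proof -
    have r: "\<rho> (E a b) w = (-2) *\<^sub>R \<rho> (cl_spin n p a b) w" for w
    proof -
      have "\<rho> (cl_spin n p a b) w = (-1/2) *\<^sub>R \<rho> (E a b) w"
        unfolding spin_ee[OF that] E_def[symmetric] by (rule scale[OF Eev[OF that]])
      then show ?thesis by simp
    qed
    show ?thesis unfolding r Ss St using eqv[OF that(1,2), of s t k] by linarith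
  qed
  have KE: "\<rho> (E a b) s \<in> K" if "a < n" "b < n" "a \<noteq> b" "s \<in> K" for a b s
  proof -
    have "\<Pi> (\<rho> (E a b) s) t k = 0" for t k
      using eqE[OF that(1-3), of s t k] that(4) unfolding K_def by (simp add: wedge_act_def)
    then show ?thesis unfolding K_def by auto
  qed
  have Kscale: "s \<in> K" if "c *\<^sub>R s \<in> K" "c \<noteq> 0" for c s
  proof -
    have "\<Pi> s t k = 0" for t k
      using that Ss[of c s t k] unfolding K_def by auto
    then show ?thesis unfolding K_def by auto
  qed
  have KE': "s \<in> K" if "a < n" "b < n" "a \<noteq> b" "\<rho> (E a b) s \<in> K" for a b s
  proof -
    have "(- eta p a * eta p b) *\<^sub>R s \<in> K" using KE[OF that] Esq[OF that(1-3)] by simp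
    moreover have "- eta p a * eta p b \<noteq> 0" by (simp add: eta_def)
    ultimately show ?thesis by (rule Kscale)
  qed
  have prodK: "\<forall>s. (s \<in> K \<longrightarrow> \<rho> (cl_prod n p (map cl_e xs)) s \<in> K) \<and> (\<rho> (cl_prod n p (map cl_e xs)) s \<in> K \<longrightarrow> s \<in> K)"
    if "\<forall>x\<in>set xs. x < n" "even (length xs)" "distinct xs" for xs
    using that
  proof (induction xs rule: induct_list012)
    case 1
    then show ?case by (simp add: cl_prod_def one)
  next
    case (2 x)
    then show ?case by simp
  next
    case (3 x y zs)
    have xy: "x < n" "y < n" "x \<noteq> y" using "3.prems" by auto
    have zev: "cl_even n (cl_prod n p (map cl_e zs))" using "3.prems" by (intro prod_even) auto
    have eq: "cl_prod n p (map cl_e (x # y # zs)) = cl_mult n p (E x y) (cl_prod n p (map cl_e zs))"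
      unfolding E_def using xy by (simp add: cl_prod_def assoc_ee)
    have r: "\<rho> (cl_prod n p (map cl_e (x # y # zs))) s = \<rho> (E x y) (\<rho> (cl_prod n p (map cl_e zs)) s)" for s
      unfolding eq by (rule mult[OF Eev[OF xy] zev])
    have IH: "\<forall>s. (s \<in> K \<longrightarrow> \<rho> (cl_prod n p (map cl_e zs)) s \<in> K) \<and> (\<rho> (cl_prod n p (map cl_e zs)) s \<in> K \<longrightarrow> s \<in> K)"
      using "3.prems" by (intro "3.IH"(1)) auto
    show ?case unfolding r using IH KE[OF xy] KE'[OF xy] by blast
  qed
  have K0: "u \<in> K" if u0: "\<forall>t. \<Pi> u t 0 = 0" for u
  proof -
    have "\<Pi> u t j = 0" for t j
    proof (cases "j = 0 \<or> n \<le> j")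
      case True
      then show ?thesis using u0 van by auto
    next
      case False
      then have j: "0 < n" "j < n" "0 \<noteq> j" by auto
      define J where "J = \<rho> (E 0 j)"
      define c where "c = - eta p 0 * eta p j"
      have cnz: "c \<noteq> 0" unfolding c_def by (simp add: eta_def)
      have JJ: "J (J w) = c *\<^sub>R w" for w unfolding J_def c_def by (rule Esq[OF j])
      have linJ: "linear J" unfolding J_def by (rule lin[OF Eev[OF j]])
      have E0: "\<Pi> (J s) t 0 + \<Pi> s (J t) 0 = -2 * eta p j * \<Pi> s t j" for s t
        using eqE[OF j, of s t 0] j unfolding J_def by (simp add: wedge_act_def)
      have Ej: "\<Pi> (J s) t j + \<Pi> s (J t) j = 2 * \<Pi> s t 0" for s t
        using eqE[OF j, of s t j] j eta0 unfolding J_def by (simp add: wedge_act_def)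
      have s1: "\<Pi> (J u) (J t) 0 = 0" for t
      proof -
        have a1: "\<Pi> (J u) t j + \<Pi> u (J t) j = 0" using Ej[of u t] u0 by simp
        have a2: "\<Pi> (J u) (J t) 0 = -2 * eta p j * \<Pi> u (J t) j" using E0[of u "J t"] u0 by simp
        have a3: "\<Pi> (J u) (J t) 0 = -2 * eta p j * \<Pi> (J u) t j"
          using E0[of "J u" t] JJ[of u] Ss[of c u t 0] u0 by simp
        from a1 a2 a3 etanz[of j] have "\<Pi> (J u) t j = 0" by auto
        with a3 show ?thesis by simp
      qed
      have s2: "\<Pi> (J u) t 0 = 0" for t
      proof -
        have "J ((1/c) *\<^sub>R J t) = t" using linJ JJ cnz by (simp add: lin_scale)
        then show ?thesis using s1[of "(1/c) *\<^sub>R J t"] by simp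
      qed
      show ?thesis using E0[of u t] s2[of t] u0 etanz[of j] by simp
    qed
    then show ?thesis unfolding K_def by auto
  qed
  define X where "X = cl_prod n p (map cl_e [1..<p'])"
  have XK: "\<forall>s. (s \<in> K \<longrightarrow> \<rho> X s \<in> K) \<and> (\<rho> X s \<in> K \<longrightarrow> s \<in> K)"
    unfolding X_def
  proof (rule prodK)
    show "\<forall>x\<in>set [1..<p']. x < n" using assms(4) unfolding n_def by auto
    show "even (length [1..<p'])" using assms(5) by simp presburger
    show "distinct [1..<p']" by simp
  qed
  have bf: "bform n p p' \<rho> \<Pi> s t = \<Pi> (\<rho> X s) t 0" for s t
    unfolding bform_def X_def eta0 by simp
  have KK: "K = {s. \<forall>t. bform n p p' \<rho> \<Pi> s t = 0}"
  proof (intro set_eqI iffI)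
    fix s assume "s \<in> K"
    then have "\<rho> X s \<in> K" using XK by blast
    then show "s \<in> {s. \<forall>t. bform n p p' \<rho> \<Pi> s t = 0}" unfolding bf K_def by (simp add: fun_eq_iff)
  next
    fix s assume "s \<in> {s. \<forall>t. bform n p p' \<rho> \<Pi> s t = 0}"
    then have "\<rho> X s \<in> K" using K0 unfolding bf by auto
    then show "s \<in> K" using XK by blast
  qed
  have S: "{s. \<forall>t. \<Pi> s t = (\<lambda>i. 0)} = {s. \<forall>t. bform (p + q) p p' \<rho> \<Pi> s t = 0}"
    using KK unfolding K_def n_def .
  have I: "(\<forall>t. \<Pi> s t = (\<lambda>i. 0)) \<longleftrightarrow> (\<forall>t. bform (p + q) p p' \<rho> \<Pi> s t = 0)" for s
    using S[unfolded set_eq_iff mem_Collect_eq] by blast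
  show ?thesis using S I by blast
qed

end
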